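(* Let $\Pi$ be a $2$-dimensional toral sub-manifold confined to a plane, parametrised as $\Pi=\{u\xi+v\eta:(u,v)\in[0,A]\times[0,B]\}$. Then $$\iint_{\Pi^2}\left(r^2+\frac{D\Omega D^T}{m}+\frac{\mathrm{tr}(H\Omega H\Omega)}{m^2}\right)dp\,dp'\ll_\Pi\frac1N+\frac{\mathcal{G}}{N^2},$$ where $$\mathcal{G}=\sum_{\substack{\lambda,\lambda'\in\Lambda_m\\ \lambda\neq\lambda'}}\left|\int_0^A\int_0^B e^{2\pi i\langle\lambda-\lambda',u\xi+v\eta\rangle}du\,dv\right|^2.$$
   Context: For a positive integer $m$ let $\Lambda=\Lambda_m=\{\lambda\in\mathbb{Z}^3:\|\lambda\|^2=m\}$ and $N=|\Lambda_m|$; $m$ ranges over integers with $m\not\equiv 0,4,7\pmod 8$ and bounds refer to $m\to\infty$. Let $\vec n=(n_1,n_2,n_3)$ be the unit normal to the plane containing $\Pi\subset\mathbb{T}^3=\mathbb{R}^3/\mathbb{Z}^3$, $\{\vec n,\xi,\eta\}$ an orthonormal basis of $\mathbb{R}^3$, and $\Pi$ parametrised by $\gamma:[0,A]\times[0,B]\to\Pi$, $(u,v)\mapsto u\xi+v\eta$, where $A=\max\{u:u\xi+v\eta\in\Pi\}$, $B=\max\{v:u\xi+v\eta\in\Pi\}$. For $p=u\xi+v\eta$, $p'=u'\xi+v'\eta$: $r(p,p')=\frac1N\sum_{\lambda\in\Lambda}e^{2\pi i\langle\lambda,(u'-u)\xi+(v'-v)\eta\rangle}$; $D(p,p')=\frac{2\pi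 i}{N}\sum_{\lambda}e^{2\pi i\langle\lambda,(u'-u)\xi+(v'-v)\eta\rangle}\lambda$ (row vector); $H(p,p')=-\frac{4\pi^2}{N}\sum_{\lambda}e^{2\pi i\langle\lambda,(u'-u)\xi+(v'-v)\eta\rangle}\lambda^T\lambda$; $\Omega=\begin{pmatrix}n_2^2+n_3^2&-n_1n_2&-n_1n_3\\-n_1n_2&n_1^2+n_3^2&-n_2n_3\\-n_1n_3&-n_2n_3&n_1^2+n_2^2\end{pmatrix}$. Integration over $\Pi^2$ is with respect to surface area measure. *)

theory Defs
  imports "HOL-Analysis.Analysis"
begin

definition Lam :: "nat \<Rightarrow> (real^3) set" where
  "Lam m = {l. (\<forall>i. l $ i \<in> \<int>) \<and> l \<bullet> l = real m}"

definition NN :: "nat \<Rightarrow> nat" where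
  "NN m = card (Lam m)"

definition ee :: "real^3 \<Rightarrow> real^3 \<Rightarrow> complex" where
  "ee l w = exp (2 * of_real pi * \<i> * of_real (l \<bullet> w))"

definition diffv :: "real^3 \<Rightarrow> real^3 \<Rightarrow> real \<times> real \<Rightarrow> real \<times> real \<Rightarrow> real^3" where
  "diffv xi eta p p' = (fst p' - fst p) *\<^sub>R xi + (snd p' - snd p) *\<^sub>R eta"

definition rr :: "nat \<Rightarrow> real^3 \<Rightarrow> complex" where
  "rr m w = (1 / of_nat (NN m)) * (\<Sum>l\<in>Lam m. ee l w)"

definition DD :: "nat \<Rightarrow> real^3 \<Rightarrow> complex^3" where
  "DD m w = (\<chi> j. (2 * of_real pi * \<i> / of_nat (NN m)) * (\<Sum>l\<in>Lam m. ee l w * of_real (l $ j)))"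

definition HH :: "nat \<Rightarrow> real^3 \<Rightarrow> complex^3^3" where
  "HH m w = (\<chi> i j. (- 4 * (of_real pi)\<^sup>2 / of_nat (NN m)) *
      (\<Sum>l\<in>Lam m. ee l w * of_real (l $ i) * of_real (l $ j)))"

definition Omega :: "real^3 \<Rightarrow> real^3^3" where
  "Omega n = vector [
     vector [(n$2)\<^sup>2 + (n$3)\<^sup>2, - (n$1 * n$2), - (n$1 * n$3)],
     vector [- (n$1 * n$2), (n$1)\<^sup>2 + (n$3)\<^sup>2, - (n$2 * n$3)],
     vector [- (n$1 * n$3), - (n$2 * n$3), (n$1)\<^sup>2 + (n$2)\<^sup>2]]"

definition OmegaC :: "real^3 \<Rightarrow> complex^3^3" where
  "OmegaC n = (\<chi> i j. of_real (Omega n $ i $ j))"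

definition quad :: "complex^3 \<Rightarrow> complex^3^3 \<Rightarrow> complex" where
  "quad d M = (\<Sum>i\<in>UNIV. \<Sum>j\<in>UNIV. d $ i * M $ i $ j * d $ j)"

definition integrand :: "nat \<Rightarrow> real^3 \<Rightarrow> real^3 \<Rightarrow> real^3 \<Rightarrow>
    (real \<times> real) \<times> (real \<times> real) \<Rightarrow> complex" where
  "integrand m n xi eta pp = (let w = diffv xi eta (fst pp) (snd pp) in
     (rr m w)\<^sup>2 + quad (DD m w) (OmegaC n) / of_nat m
     + trace (HH m w ** OmegaC n ** HH m w ** OmegaC n) / (of_nat m)\<^sup>2)"

definition GG :: "nat \<Rightarrow> real^3 \<Rightarrow> real^3 \<Rightarrow> real \<Rightarrow> real \<Rightarrow> real" where
  "GG m xi eta A B = (\<Sum>(l, l')\<in>{(l, l'). l \<in> Lam m \<and> l' \<in> Lam m \<and> l \<noteq> l'}.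
     (cmod (integral ({0..A} \<times> {0..B})
        (\<lambda>(u, v). ee (l - l') (u *\<^sub>R xi + v *\<^sub>R eta))))\<^sup>2)"

end

theory Submission
  imports Defs
begin

lemma ee_add: "ee l w * ee l' w = ee (l + l') w"
  by (simp add: ee_def inner_add_left distrib_left distrib_right flip: exp_add)

lemma quad_expand:
  fixes f g :: "'l \<Rightarrow> 'n::finite \<Rightarrow> complex"
  shows "(\<Sum>i\<in>UNIV. \<Sum>j\<in>UNIV. (\<Sum>l\<in>L. f l i) * M i j * (\<Sum>l'\<in>L. g l' j))
       = (\<Sum>l\<in>L. \<Sum>l'\<in>L. \<Sum>i\<in>UNIV. \<Sum>j\<in>UNIV. f l i * M i j * g l' j)"
proof -
  have "(\<Sum>i\<in>UNIV. \<Sum>j\<in>UNIV. (\<Sum>l\<in>L. f l i) * M i j * (\<Sum>l'\<in>L. g l' j))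
     = (\<Sum>i\<in>UNIV. \<Sum>j\<in>UNIV. \<Sum>l\<in>L. \<Sum>l'\<in>L. f l i * M i j * g l' j)"
  proof (intro sum.cong refl)
    fix i j
    show "(\<Sum>l\<in>L. f l i) * M i j * (\<Sum>l'\<in>L. g l' j) = (\<Sum>l\<in>L. \<Sum>l'\<in>L. f l i * M i j * g l' j)"
      by (subst sum_distrib_right, subst sum_product, simp)
  qed
  also have "\<dots> = (\<Sum>i\<in>UNIV. \<Sum>l\<in>L. \<Sum>j\<in>UNIV. \<Sum>l'\<in>L. f l i * M i j * g l' j)"
    by (intro sum.cong refl, rule sum.swap)
  also have "\<dots> = (\<Sum>l\<in>L. \<Sum>i\<in>UNIV. \<Sum>j\<in>UNIV. \<Sum>l'\<in>L. f l i * M i j * g l' j)"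
    by (rule sum.swap)
  also have "\<dots> = (\<Sum>l\<in>L. \<Sum>i\<in>UNIV. \<Sum>l'\<in>L. \<Sum>j\<in>UNIV. f l i * M i j * g l' j)"
    by (intro sum.cong refl, rule sum.swap)
  also have "\<dots> = (\<Sum>l\<in>L. \<Sum>l'\<in>L. \<Sum>i\<in>UNIV. \<Sum>j\<in>UNIV. f l i * M i j * g l' j)"
    by (intro sum.cong refl, rule sum.swap)
  finally show ?thesis .
qed

lemma trace4_expand:
  fixes H K :: "complex^'n::finite^'n"
  shows "trace (H ** M ** K ** N) = (\<Sum>i\<in>UNIV. \<Sum>q\<in>UNIV. \<Sum>k\<in>UNIV. \<Sum>j\<in>UNIV.
      H$i$j * M$j$k * K$k$q * N$q$i)"
  by (simp add: trace_def matrix_matrix_mult_def sum_distrib_left sum_distrib_right mult.assoc)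

lemma swapL: "(\<Sum>i\<in>(UNIV::'n::finite set). \<Sum>l\<in>(L::(real^3) set). f i l) = (\<Sum>l\<in>L. \<Sum>i\<in>UNIV. f i l)"
  by (rule sum.swap)

definition qq :: "real^3 \<Rightarrow> real^3 \<Rightarrow> real^3 \<Rightarrow> complex" where
  "qq n l l' = (\<Sum>i\<in>UNIV. \<Sum>j\<in>UNIV. of_real (l$i) * OmegaC n $i$j * of_real (l'$j))"

definition cc :: "nat \<Rightarrow> real^3 \<Rightarrow> real^3 \<Rightarrow> real^3 \<Rightarrow> complex" where
  "cc m n l l' = 1 / (of_nat (NN m))^2 + (2 * of_real pi * \<i> / of_nat (NN m))^2 * qq n l l' / of_nat m
     + (- 4 * (of_real pi)\<^sup>2 / of_nat (NN m))^2 * (qq n l l' * qq n l' l) / (of_nat m)^2"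

lemma trace_gen:
  fixes F G :: "real^3 \<Rightarrow> 'n::finite \<Rightarrow> 'n \<Rightarrow> complex"
  shows "(\<Sum>i\<in>UNIV. \<Sum>q\<in>UNIV. \<Sum>k\<in>UNIV. \<Sum>j\<in>UNIV. (\<Sum>l\<in>L. F l i j) * M j k * (\<Sum>l'\<in>L. G l' k q) * N q i)
   = (\<Sum>l\<in>L. \<Sum>l'\<in>L. \<Sum>i\<in>UNIV. \<Sum>q\<in>UNIV. \<Sum>k\<in>UNIV. \<Sum>j\<in>UNIV. F l i j * M j k * G l' k q * N q i)"
  by (simp add: sum_distrib_left sum_distrib_right swapL, rule sum.swap)

lemma quad_gen:
  fixes F G :: "real^3 \<Rightarrow> 'n::finite \<Rightarrow> complex"
  shows "(\<Sum>i\<in>UNIV. \<Sum>j\<in>UNIV. (\<Sum>l\<in>L. F l i) * M i j * (\<Sum>l'\<in>L. G l' j))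
   = (\<Sum>l\<in>L. \<Sum>l'\<in>L. \<Sum>i\<in>UNIV. \<Sum>j\<in>UNIV. F l i * M i j * G l' j)"
  by (simp add: sum_distrib_left sum_distrib_right swapL, rule sum.swap)

lemma rr_sq: "(rr m w)^2 = (\<Sum>l\<in>Lam m. \<Sum>l'\<in>Lam m. 1 / (of_nat (NN m))^2 * ee (l + l') w)"
  by (simp add: rr_def power2_eq_square sum_product sum_distrib_left ee_add[symmetric] mult_ac)

lemma quad_sq: "quad (DD m w) (OmegaC n) = (\<Sum>l\<in>Lam m. \<Sum>l'\<in>Lam m.
   (2 * of_real pi * \<i> / of_nat (NN m))^2 * qq n l l' * ee (l + l') w)"
proof -
  define a where "a = 2 * of_real pi * \<i> / (of_nat (NN m) :: complex)"
  have "quad (DD m w) (OmegaC n) = (\<Sum>i\<in>UNIV. \<Sum>j\<in>UNIV. (\<Sum>l\<in>Lam m. a * (ee l w * of_real (l$i))) * OmegaC n$i$j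
      * (\<Sum>l'\<in>Lam m. a * (ee l' w * of_real (l'$j))))"
    by (simp add: quad_def DD_def a_def sum_distrib_left)
  also have "\<dots> = (\<Sum>l\<in>Lam m. \<Sum>l'\<in>Lam m. \<Sum>i\<in>UNIV. \<Sum>j\<in>UNIV. a * (ee l w * of_real (l$i)) * OmegaC n$i$j
      * (a * (ee l' w * of_real (l'$j))))"
    by (rule quad_gen)
  also have "\<dots> = (\<Sum>l\<in>Lam m. \<Sum>l'\<in>Lam m. a^2 * qq n l l' * ee (l + l') w)"
    by (intro sum.cong refl) (simp add: qq_def sum_distrib_left sum_distrib_right ee_add[symmetric] mult_ac power2_eq_square)
  finally show ?thesis by (simp add: a_def)
qed

lemma trace_sq: "trace (HH m w ** OmegaC n ** HH m w ** OmegaC n) = (\<Sum>l\<in>Lam m. \<Sum>l'\<in>Lam m.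
   (- 4 * (of_real pi)\<^sup>2 / of_nat (NN m))^2 * (qq n l l' * qq n l' l) * ee (l + l') w)"
proof -
  define b where "b = - 4 * (of_real pi)\<^sup>2 / (of_nat (NN m) :: complex)"
  have "trace (HH m w ** OmegaC n ** HH m w ** OmegaC n) = (\<Sum>i\<in>UNIV. \<Sum>q\<in>UNIV. \<Sum>k\<in>UNIV. \<Sum>j\<in>UNIV.
     (\<Sum>l\<in>Lam m. b * (ee l w * of_real (l$i) * of_real (l$j))) * OmegaC n$j$k
      * (\<Sum>l'\<in>Lam m. b * (ee l' w * of_real (l'$k) * of_real (l'$q))) * OmegaC n$q$i)"
    by (simp add: trace4_expand HH_def b_def sum_distrib_left)
  also have "\<dots> = (\<Sum>l\<in>Lam m. \<Sum>l'\<in>Lam m. \<Sum>i\<in>UNIV. \<Sum>q\<in>UNIV. \<Sum>k\<in>UNIV. \<Sum>j\<in>UNIV.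
     b * (ee l w * of_real (l$i) * of_real (l$j)) * OmegaC n$j$k
      * (b * (ee l' w * of_real (l'$k) * of_real (l'$q))) * OmegaC n$q$i)"
    by (rule trace_gen)
  also have "\<dots> = (\<Sum>l\<in>Lam m. \<Sum>l'\<in>Lam m. b^2 * (qq n l l' * qq n l' l) * ee (l + l') w)"
  proof (intro sum.cong refl)
    fix l l'
    have "b^2 * (qq n l l' * qq n l' l) * ee (l + l') w = (\<Sum>j\<in>UNIV. \<Sum>q\<in>UNIV. \<Sum>k\<in>UNIV. \<Sum>i\<in>UNIV. b^2 * ee (l + l') w * (of_real (l$j) * OmegaC n $j$k * of_real (l'$k)) * (of_real (l'$q) * OmegaC n $q$i * of_real (l$i)))"
      unfolding qq_def sum_product by (simp add: sum_distrib_left mult_ac)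
    also have "\<dots> = (\<Sum>j\<in>UNIV. \<Sum>q\<in>UNIV. \<Sum>i\<in>UNIV. \<Sum>k\<in>UNIV. b^2 * ee (l + l') w * (of_real (l$j) * OmegaC n $j$k * of_real (l'$k)) * (of_real (l'$q) * OmegaC n $q$i * of_real (l$i)))"
      by (rule sum.cong[OF refl], rule sum.cong[OF refl], rule sum.swap )
    also have "\<dots> = (\<Sum>j\<in>UNIV. \<Sum>i\<in>UNIV. \<Sum>q\<in>UNIV. \<Sum>k\<in>UNIV. b^2 * ee (l + l') w * (of_real (l$j) * OmegaC n $j$k * of_real (l'$k)) * (of_real (l'$q) * OmegaC n $q$i * of_real (l$i)))"
      by (rule sum.cong[OF refl], rule sum.swap )
    also have "\<dots> = (\<Sum>i\<in>UNIV. \<Sum>j\<in>UNIV. \<Sum>q\<in>UNIV. \<Sum>k\<in>UNIV. b^2 * ee (l + l') w * (of_real (l$j) * OmegaC n $j$k * of_real (l'$k)) * (of_real (l'$q) * OmegaC n $q$i * of_real (l$i)))"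
      by (rule sum.swap )
    also have "\<dots> = (\<Sum>i\<in>UNIV. \<Sum>q\<in>UNIV. \<Sum>j\<in>UNIV. \<Sum>k\<in>UNIV. b^2 * ee (l + l') w * (of_real (l$j) * OmegaC n $j$k * of_real (l'$k)) * (of_real (l'$q) * OmegaC n $q$i * of_real (l$i)))"
      by (rule sum.cong[OF refl], rule sum.swap )
    also have "\<dots> = (\<Sum>i\<in>UNIV. \<Sum>q\<in>UNIV. \<Sum>k\<in>UNIV. \<Sum>j\<in>UNIV. b^2 * ee (l + l') w * (of_real (l$j) * OmegaC n $j$k * of_real (l'$k)) * (of_real (l'$q) * OmegaC n $q$i * of_real (l$i)))"
      by (rule sum.cong[OF refl], rule sum.cong[OF refl], rule sum.swap )
    finally show "(\<Sum>i\<in>UNIV. \<Sum>q\<in>UNIV. \<Sum>k\<in>UNIV. \<Sum>j\<in>UNIV.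
     b * (ee l w * of_real (l$i) * of_real (l$j)) * OmegaC n$j$k
      * (b * (ee l' w * of_real (l'$k) * of_real (l'$q))) * OmegaC n$q$i) = b^2 * (qq n l l' * qq n l' l) * ee (l + l') w"
      by (simp add: ee_add[symmetric] mult_ac power2_eq_square)
  qed
  finally show ?thesis by (simp add: b_def)
qed

lemma integrand_expand:
  "integrand m n xi eta pp = (\<Sum>l\<in>Lam m. \<Sum>l'\<in>Lam m. cc m n l l' * ee (l + l') (diffv xi eta (fst pp) (snd pp)))"
  unfolding integrand_def Let_def rr_sq quad_sq trace_sq cc_def
  apply (simp add: sum_divide_distrib sum.distrib[symmetric] distrib_right mult_ac)
  apply (intro sum.cong refl)
  apply (simp add: algebra_simps divide_inverse)
  done

definition II :: "real^3 \<Rightarrow> real^3 \<Rightarrow> real \<Rightarrow> real \<Rightarrow> real^3 \<Rightarrow> complex" where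
  "II xi eta A B mu = integral ({0..A} \<times> {0..B}) (\<lambda>p. ee mu (fst p *\<^sub>R xi + snd p *\<^sub>R eta))"

lemma ee_cont: "continuous_on X (\<lambda>p. ee mu (fst p *\<^sub>R xi + snd p *\<^sub>R eta))"
  unfolding ee_def by (intro continuous_intros)

lemma ee_diffv: "ee mu (diffv xi eta p p') = ee (- mu) (fst p *\<^sub>R xi + snd p *\<^sub>R eta) * ee mu (fst p' *\<^sub>R xi + snd p' *\<^sub>R eta)"
  unfolding ee_def diffv_def
  by (simp add: inner_add_right inner_diff_right algebra_simps flip: exp_add)

lemma box_eq: "({0..A} \<times> {0..B}) = cbox (0::real, 0::real) (A, B)"
  by (simp add: cbox_Pair_eq)

lemma JJ: "integral (({0..A} \<times> {0..B}) \<times> ({0..A} \<times> {0..B})) (\<lambda>pp. ee mu (diffv xi eta (fst pp) (snd pp)))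
   = II xi eta A B (- mu) * II xi eta A B mu"
proof -
  let ?g = "\<lambda>p. ee (- mu) (fst p *\<^sub>R xi + snd p *\<^sub>R eta)"
  let ?h = "\<lambda>p. ee mu (fst p *\<^sub>R xi + snd p *\<^sub>R eta)"
  have e: "(({0..A} \<times> {0..B}) \<times> ({0..A} \<times> {0..B})) = cbox ((0::real, 0::real), (0::real, 0::real)) ((A, B), (A, B))"
    by (simp add: cbox_Pair_eq)
  have c: "continuous_on X (\<lambda>pp. ?g (fst pp) * ?h (snd pp))" for X
    unfolding ee_def by (intro continuous_intros)
  have "integral (({0..A} \<times> {0..B}) \<times> ({0..A} \<times> {0..B})) (\<lambda>pp. ee mu (diffv xi eta (fst pp) (snd pp)))
     = integral (cbox ((0::real, 0::real), (0::real, 0::real)) ((A, B), (A, B))) (\<lambda>pp. ?g (fst pp) * ?h (snd pp))"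
    unfolding e ee_diffv ..
  also have "\<dots> = integral (cbox (0,0) (A,B)) (\<lambda>x. integral (cbox (0,0) (A,B)) (\<lambda>y. ?g x * ?h y))"
    using integral_prod_continuous[OF c] by simp
  also have "\<dots> = II xi eta A B (- mu) * II xi eta A B mu"
    unfolding II_def box_eq by simp
  finally show ?thesis .
qed

lemma Omega_bound:
  assumes "norm n = 1"
  shows "\<bar>Omega n $ i $ j\<bar> \<le> 1"
proof -
  have "n \<bullet> n = 1" using assms by (simp add: dot_square_norm)
  hence s: "(n$1)^2 + (n$2)^2 + (n$3)^2 = 1" by (simp add: inner_vec_def sum_3 power2_eq_square)
  have a: "\<bar>x * y\<bar> \<le> 1" if "x^2 + y^2 \<le> 1" for x y :: real
  proof -
    have "0 \<le> (x - y)^2" "0 \<le> (x + y)^2" by simp_all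
    thus ?thesis using that by (simp add: abs_le_iff power2_eq_square algebra_simps)
  qed
  have q: "0 \<le> (n$1)^2" "0 \<le> (n$2)^2" "0 \<le> (n$3)^2" by simp_all
  show ?thesis
    using exhaust_3[of i] exhaust_3[of j]
    apply (elim disjE)
    apply (simp_all add: Omega_def)
    apply ((rule a)?; smt (verit) s q)+
    done
qed

lemma Lam_comp: "l \<in> Lam m \<Longrightarrow> \<bar>l $ i\<bar> \<le> sqrt (real m)"
  unfolding Lam_def using component_le_norm_cart[of l i] by (simp add: norm_eq_sqrt_inner)

lemma qq_bound:
  assumes "norm n = 1" "l \<in> Lam m" "l' \<in> Lam m"
  shows "cmod (qq n l l') \<le> 9 * real m"
proof -
  have t: "cmod (of_real (l$i) * OmegaC n $i$j * of_real (l'$j)) \<le> real m" for i j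
  proof -
    have "cmod (of_real (l$i) * OmegaC n $i$j * of_real (l'$j)) = \<bar>l$i\<bar> * \<bar>Omega n $i$j\<bar> * \<bar>l'$j\<bar>"
      by (simp add: OmegaC_def norm_mult)
    also have "\<dots> \<le> sqrt (real m) * 1 * sqrt (real m)"
      by (intro mult_mono Lam_comp assms Omega_bound) auto
    finally show ?thesis by simp
  qed
  have "cmod (qq n l l') \<le> (\<Sum>i\<in>UNIV. \<Sum>j\<in>UNIV. cmod (of_real (l$i) * OmegaC n $i$j * of_real (l'$j)))"
    unfolding qq_def by (rule order_trans[OF norm_sum sum_mono[OF norm_sum]])
  also have "\<dots> \<le> (\<Sum>i\<in>(UNIV::3 set). \<Sum>j\<in>(UNIV::3 set). real m)"
    by (intro sum_mono t)
  finally show ?thesis by simp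
qed

lemma cc_bound:
  assumes "norm n = 1" "l \<in> Lam m" "l' \<in> Lam m" "m \<ge> 1"
  shows "cmod (cc m n l l') \<le> (1 + 36 * pi^2 + 1296 * pi^4) / (real (NN m))^2"
proof -
  let ?N = "real (NN m)"
  have q1: "cmod (qq n l l') \<le> 9 * real m" and q2: "cmod (qq n l' l) \<le> 9 * real m"
    using qq_bound assms by auto
  have m0: "real m > 0" using assms by simp
  have "cmod (cc m n l l') \<le> 1 / ?N^2 + 4 * pi^2 / ?N^2 * cmod (qq n l l') / real m
      + 16 * pi^4 / ?N^2 * (cmod (qq n l l') * cmod (qq n l' l)) / (real m)^2"
    unfolding cc_def
    apply (rule order_trans[OF norm_triangle_ineq])
    apply (rule add_mono[OF order_trans[OF norm_triangle_ineq]])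
    apply (simp_all add: norm_mult norm_divide norm_power power_mult_distrib)
    apply (simp_all add: power_divide power_mult_distrib field_simps)
    done
  also have "\<dots> \<le> 1 / ?N^2 + 4 * pi^2 / ?N^2 * (9 * real m) / real m
      + 16 * pi^4 / ?N^2 * ((9 * real m) * (9 * real m)) / (real m)^2"
    by (intro add_mono order_refl divide_right_mono mult_left_mono mult_mono q1 q2) auto
  also have "\<dots> = (1 + 36 * pi^2 + 1296 * pi^4) / ?N^2"
    using m0 by (simp add: field_simps power2_eq_square add_divide_distrib)
  finally show ?thesis .
qed

lemma Lam_uminus: "bij_betw uminus (Lam m) (Lam m)"
proof -
  have a: "- l \<in> Lam m" if "l \<in> Lam m" for l
    using that unfolding Lam_def by auto
  show ?thesis
    by (rule bij_betw_byWitness[where f'=uminus]) (auto simp: a)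
qed

lemma sum_plus_minus:
  "(\<Sum>l\<in>Lam m. \<Sum>l'\<in>Lam m. f (l + l')) = (\<Sum>l\<in>Lam m. \<Sum>l'\<in>Lam m. (f (l - l') :: real))"
proof (rule sum.cong[OF refl])
  fix l
  show "(\<Sum>l'\<in>Lam m. f (l + l')) = (\<Sum>l'\<in>Lam m. f (l - l'))"
    using sum.reindex_bij_betw[OF Lam_uminus, of "\<lambda>l'. f (l - l')"] by simp
qed

lemma sum_neg_plus_minus:
  "(\<Sum>l\<in>Lam m. \<Sum>l'\<in>Lam m. f (- (l + l'))) = (\<Sum>l\<in>Lam m. \<Sum>l'\<in>Lam m. (f (l - l') :: real))"
  using sum.reindex_bij_betw[OF Lam_uminus, of "\<lambda>l. \<Sum>l'\<in>Lam m. f (l - l')"] by (simp add: algebra_simps)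

lemma II0: "A > 0 \<Longrightarrow> B > 0 \<Longrightarrow> cmod (II xi eta A B 0) = A * B"
  unfolding II_def box_eq by (simp add: ee_def content_Pair)

lemma GG_eq: "II xi eta A B (l - l') = integral ({0..A} \<times> {0..B}) (\<lambda>(u, v). ee (l - l') (u *\<^sub>R xi + v *\<^sub>R eta))"
  unfolding II_def by (simp add: split_def)

lemma diag_split:
  assumes "finite (Lam m)" "A > 0" "B > 0"
  shows "(\<Sum>l\<in>Lam m. \<Sum>l'\<in>Lam m. (cmod (II xi eta A B (l - l')))^2)
     = real (NN m) * (A * B)^2 + GG m xi eta A B"
proof -
  let ?F = "\<lambda>(l, l'). (cmod (II xi eta A B (l - l')))^2"
  let ?D = "(\<lambda>l. (l, l)) ` Lam m"
  let ?O = "{(l, l'). l \<in> Lam m \<and> l' \<in> Lam m \<and> l \<noteq> l'}"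
  have u: "Lam m \<times> Lam m = ?D \<union> ?O" by auto
  have fin: "finite ?D" "finite ?O"
    using assms(1) by (auto intro: finite_subset[of _ "Lam m \<times> Lam m"])
  have "(\<Sum>l\<in>Lam m. \<Sum>l'\<in>Lam m. (cmod (II xi eta A B (l - l')))^2) = sum ?F (Lam m \<times> Lam m)"
    by (simp add: sum.cartesian_product)
  also have "\<dots> = sum ?F ?D + sum ?F ?O"
    unfolding u by (rule sum.union_disjoint) (use fin in auto)
  also have "sum ?F ?D = (\<Sum>l\<in>Lam m. (A * B)^2)"
    by (subst sum.reindex) (auto simp: inj_on_def II0 assms)
  also have "sum ?F ?O = GG m xi eta A B"
    unfolding GG_def by (intro sum.cong refl) (auto simp: GG_eq)
  finally show ?thesis by (simp add: NN_def)
qed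

lemma ee_diffv_int:
  "(\<lambda>pp. ee mu (diffv xi eta (fst pp) (snd pp))) integrable_on (({0..A} \<times> {0..B}) \<times> ({0..A} \<times> {0..B}))"
proof -
  have e: "(({0..A} \<times> {0..B}) \<times> ({0..A} \<times> {0..B})) = cbox ((0::real, 0::real), (0::real, 0::real)) ((A, B), (A, B))"
    by (simp add: cbox_Pair_eq)
  show ?thesis unfolding e
    by (rule integrable_continuous) (unfold ee_def diffv_def, intro continuous_intros)
qed

lemma amgm: "cmod (x * y) \<le> ((cmod x)^2 + (cmod y)^2) / 2"
proof -
  have "0 \<le> (cmod x - cmod y)^2" by simp
  thus ?thesis by (simp add: norm_mult power2_eq_square algebra_simps)
qed

lemma sum_half: "(\<Sum>l\<in>L. \<Sum>l'\<in>L. K * ((f l l' + g l l') / 2)) = K / 2 * ((\<Sum>l\<in>L. \<Sum>l'\<in>L. f l l') + (\<Sum>l\<in>L. \<Sum>l'\<in>L. (g l l' :: real)))"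
  by (simp add: sum_distrib_left sum.distrib distrib_left add_divide_distrib)

lemma main_bound:
  assumes n1: "norm n = 1" and m1: "m \<ge> 1" and fin: "finite (Lam m)" and A: "A > 0" and B: "B > 0"
  shows "cmod (integral (({0..A} \<times> {0..B}) \<times> ({0..A} \<times> {0..B})) (integrand m n xi eta))
    \<le> (1 + 36 * pi^2 + 1296 * pi^4) / (real (NN m))^2 * (real (NN m) * (A * B)^2 + GG m xi eta A B)"
proof -
  let ?X = "(({0..A} \<times> {0..B}) \<times> ({0..A} \<times> {0..B}))"
  let ?K = "(1 + 36 * pi^2 + 1296 * pi^4) / (real (NN m))^2"
  let ?I = "II xi eta A B"
  let ?e = "\<lambda>mu pp. ee mu (diffv xi eta (fst pp) (snd pp))"
  have ie: "integrand m n xi eta = (\<lambda>pp. \<Sum>l\<in>Lam m. \<Sum>l'\<in>Lam m. cc m n l l' * ?e (l + l') pp)"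
    by (rule ext, rule integrand_expand)
  have int1: "(\<lambda>pp. cc m n l l' * ?e mu pp) integrable_on ?X" for l l' mu
    by (rule integrable_on_mult_right[OF ee_diffv_int])
  have "integral ?X (integrand m n xi eta) = (\<Sum>l\<in>Lam m. integral ?X (\<lambda>pp. \<Sum>l'\<in>Lam m. cc m n l l' * ?e (l + l') pp))"
    unfolding ie by (rule integral_sum[OF fin]) (intro integrable_sum fin int1)
  also have "\<dots> = (\<Sum>l\<in>Lam m. \<Sum>l'\<in>Lam m. integral ?X (\<lambda>pp. cc m n l l' * ?e (l + l') pp))"
    by (intro sum.cong refl integral_sum fin int1)
  also have "\<dots> = (\<Sum>l\<in>Lam m. \<Sum>l'\<in>Lam m. cc m n l l' * (?I (- (l + l')) * ?I (l + l')))"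
    by (simp add: JJ)
  finally have eq: "integral ?X (integrand m n xi eta) = \<dots>" .
  have "cmod (integral ?X (integrand m n xi eta)) \<le> (\<Sum>l\<in>Lam m. \<Sum>l'\<in>Lam m. cmod (cc m n l l' * (?I (- (l + l')) * ?I (l + l'))))"
    unfolding eq by (rule order_trans[OF norm_sum sum_mono[OF norm_sum]])
  also have "\<dots> \<le> (\<Sum>l\<in>Lam m. \<Sum>l'\<in>Lam m. ?K * (((cmod (?I (- (l + l'))))^2 + (cmod (?I (l + l')))^2) / 2))"
    unfolding norm_mult[of "cc m n _ _"]
    by (intro sum_mono mult_mono cc_bound amgm n1 m1) auto
  also have "\<dots> = ?K / 2 * ((\<Sum>l\<in>Lam m. \<Sum>l'\<in>Lam m. (cmod (?I (- (l + l'))))^2)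
        + (\<Sum>l\<in>Lam m. \<Sum>l'\<in>Lam m. (cmod (?I (l + l')))^2))"
    by (rule sum_half)
  also have "\<dots> = ?K * (\<Sum>l\<in>Lam m. \<Sum>l'\<in>Lam m. (cmod (?I (l - l')))^2)"
    by (simp only: sum_plus_minus[of "\<lambda>x. (cmod (?I x))^2"] sum_neg_plus_minus[of "\<lambda>x. (cmod (?I x))^2"]) simp
  also have "\<dots> = ?K * (real (NN m) * (A * B)^2 + GG m xi eta A B)"
    by (simp add: diag_split fin A B)
  finally show ?thesis .
qed

theorem lemma4p1:
  fixes n xi eta :: "real^3" and A B :: real
  assumes "norm n = 1" and "norm xi = 1" and "norm eta = 1"
    and "n \<bullet> xi = 0" and "n \<bullet> eta = 0" and "xi \<bullet> eta = 0"
    and "A > 0" and "B > 0"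
  shows "\<exists>C M. \<forall>m::nat. m \<ge> M \<and> m mod 8 \<notin> {0, 4, 7} \<longrightarrow>
    cmod (integral (({0..A} \<times> {0..B}) \<times> ({0..A} \<times> {0..B})) (integrand m n xi eta))
      \<le> C * (1 / real (NN m) + GG m xi eta A B / (real (NN m))\<^sup>2)"
proof (intro exI allI impI)
  fix m :: nat
  assume "1 \<le> m \<and> m mod 8 \<notin> {0, 4, 7}"
  hence m1: "m \<ge> 1" by simp
  define K where "K = 1 + 36 * pi^2 + 1296 * pi^4"
  define N where "N = real (NN m)"
  define G where "G = GG m xi eta A B"
  define x where "x = (A * B)^2"
  have K0: "K \<ge> 0" unfolding K_def by simp
  have G0: "G \<ge> 0" unfolding G_def GG_def by (intro sum_nonneg) auto
  have x0: "x \<ge> 0" unfolding x_def by simp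
  show "cmod (integral (({0..A} \<times> {0..B}) \<times> ({0..A} \<times> {0..B})) (integrand m n xi eta))
      \<le> (K * (1 + (A * B)^2)) * (1 / real (NN m) + GG m xi eta A B / (real (NN m))\<^sup>2)"
  proof (cases "finite (Lam m)")
    case True
    have "cmod (integral (({0..A} \<times> {0..B}) \<times> ({0..A} \<times> {0..B})) (integrand m n xi eta))
        \<le> K / N^2 * (N * x + G)"
      using main_bound[OF assms(1) m1 True assms(7,8)] unfolding K_def N_def G_def x_def .
    also have "\<dots> = (K * x) * (1 / N) + K * (G / N^2)"
      by (cases "N = 0") (simp_all add: field_simps power2_eq_square)
    also have "\<dots> \<le> (K * (1 + x)) * (1 / N) + (K * (1 + x)) * (G / N^2)"
      unfolding N_def using K0 G0 x0
      by (intro add_mono mult_right_mono mult_left_mono) (auto simp: algebra_simps)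
    finally show ?thesis unfolding N_def G_def x_def by (simp add: algebra_simps)
  next
    case False
    have "integrand m n xi eta = (\<lambda>pp. 0)"
      by (rule ext) (simp add: integrand_expand False)
    moreover have "NN m = 0" using False by (simp add: NN_def)
    ultimately show ?thesis by simp
  qed
qed

end
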